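(* For each integer $r\ge 1$, let $G_r=(r+1)K_2 \nabla (r+1)K_2$, of order $4r+4$. Then $LE(G_r)=LE(K_{4r+4})=8r+6$ (so $G_r$ is $L$-borderenergetic), and $G_r$ and $K_{4r+4}$ have different Laplacian spectra.
   Context: All graphs are finite, simple and undirected. The Laplacian matrix of $G$ is $L(G)=D-A$ ($D$ degree matrix, $A$ adjacency matrix). For a graph $G$ on $n$ vertices with Laplacian eigenvalues $\mu_1,\dots,\mu_n$ and average degree $\overline d = 2|E(G)|/n$, the Laplacian energy is $LE(G)=\sum_{i=1}^n|\mu_i-\overline d|$. One has $LE(K_n)=2n-2$. A graph $G$ on $n$ vertices is $L$-borderenergetic if $LE(G)=LE(K_n)$. $K_m$ is the complete graph on $m$ vertices, $mG$ is the disjoint union of $m$ copies of $G$, and the join $G_1\nabla G_2$ is obtained from the disjoint union of $G_1$ and $G_2$ by adding all edges between a vertex of $G_1$ and a vertex of $G_2$. *)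

theory Defs
  imports "Jordan_Normal_Form.Char_Poly" "HOL-Computational_Algebra.Polynomial"
begin

text \<open>A finite simple graph on the vertex set {0..<n} is represented as a pair (n, E),
  where E is an adjacency relation; only vertices below n matter.  Simplicity
  (symmetry and irreflexivity) is ensured by all the constructions below.\<close>

type_synonym graph = "nat \<times> (nat \<Rightarrow> nat \<Rightarrow> bool)"

definition order :: "graph \<Rightarrow> nat" where "order G = fst G"
definition adj :: "graph \<Rightarrow> nat \<Rightarrow> nat \<Rightarrow> bool" where "adj G = snd G"

definition complete_graph :: "nat \<Rightarrow> graph" ("K") where
  "K m = (m, \<lambda>i j. i < m \<and> j < m \<and> i \<noteq> j)"

definition disj_union :: "graph \<Rightarrow> graph \<Rightarrow> graph" where
  "disj_union G1 G2 = (order G1 + order G2, \<lambda>i j.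
      (i < order G1 \<and> j < order G1 \<and> adj G1 i j) \<or>
      (order G1 \<le> i \<and> order G1 \<le> j \<and> i < order G1 + order G2 \<and> j < order G1 + order G2
        \<and> adj G2 (i - order G1) (j - order G1)))"

definition join :: "graph \<Rightarrow> graph \<Rightarrow> graph" where
  "join G1 G2 = (order G1 + order G2, \<lambda>i j.
      adj (disj_union G1 G2) i j \<or>
      (i < order G1 \<and> order G1 \<le> j \<and> j < order G1 + order G2) \<or>
      (j < order G1 \<and> order G1 \<le> i \<and> i < order G1 + order G2))"

fun copies :: "nat \<Rightarrow> graph \<Rightarrow> graph" where
  "copies 0 G = (0, \<lambda>i j. False)"
| "copies (Suc m) G = disj_union (copies m G) G"

definition degree :: "graph \<Rightarrow> nat \<Rightarrow> nat" where
  "degree G i = card {j. j < order G \<and> adj G i j}"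

definition num_edges :: "graph \<Rightarrow> nat" where
  "num_edges G = card {(i, j). i < j \<and> j < order G \<and> adj G i j}"

definition avg_degree :: "graph \<Rightarrow> real" where
  "avg_degree G = 2 * real (num_edges G) / real (order G)"

definition laplacian :: "graph \<Rightarrow> real mat" where
  "laplacian G = mat (order G) (order G) (\<lambda>(i, j).
      (if i = j then real (degree G i) else 0) - (if adj G i j then 1 else 0))"

definition laplacian_spectrum :: "graph \<Rightarrow> complex multiset" where
  "laplacian_spectrum G = proots (char_poly (map_mat complex_of_real (laplacian G)))"

definition laplacian_energy :: "graph \<Rightarrow> real" ("LE") where
  "LE G = (\<Sum>\<^sub># (image_mset (\<lambda>\<mu>. cmod (\<mu> - complex_of_real (avg_degree G))) (laplacian_spectrum G)))"

definition L_borderenergetic :: "graph \<Rightarrow> bool" where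
  "L_borderenergetic G \<longleftrightarrow> LE G = LE (K (order G))"

end

theory Submission
  imports Defs
begin


lemma char_poly_orth_eig:
  fixes A :: "'a::field mat" and v :: "'b \<Rightarrow> nat \<Rightarrow> 'a"
  assumes A: "A \<in> carrier_mat n n" and fin: "finite S" and card: "card S = n"
  and eig: "\<And>s i. s\<in>S \<Longrightarrow> i<n \<Longrightarrow> (\<Sum>k<n. A$$(i,k) * v s k) = lam s * v s i"
  and orth: "\<And>s t. s\<in>S \<Longrightarrow> t\<in>S \<Longrightarrow> s\<noteq>t \<Longrightarrow> (\<Sum>i<n. v s i * v t i) = 0"
  and nz: "\<And>s. s\<in>S \<Longrightarrow> (\<Sum>i<n. v s i * v s i) \<noteq> 0"
  shows "char_poly A = (\<Prod>s\<in>S. [:- lam s, 1:])"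
proof -
  obtain f where f: "bij_betw f {0..<n} S" using ex_bij_betw_nat_finite[OF fin] card by auto
  have fS: "\<And>j. j < n \<Longrightarrow> f j \<in> S" using f by (auto simp: bij_betw_def)
  have finj: "\<And>i j. i<n \<Longrightarrow> j<n \<Longrightarrow> f i = f j \<Longrightarrow> i = j" using f by (auto simp: bij_betw_def inj_on_def)
  define N where "N i = (\<Sum>k<n. v (f i) k * v (f i) k)" for i
  define P where "P = mat n n (\<lambda>(i,j). v (f j) i)"
  define Q where "Q = mat n n (\<lambda>(i,j). v (f i) j / N i)"
  define D where "D = mat n n (\<lambda>(i,j). if i = j then lam (f i) else 0)"
  have P: "P \<in> carrier_mat n n" and Q: "Q \<in> carrier_mat n n" and D: "D \<in> carrier_mat n n"
    by (auto simp: P_def Q_def D_def)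
  have QP: "Q * P = 1\<^sub>m n"
  proof (rule eq_matI)
    fix i j assume ij: "i < dim_row (1\<^sub>m n :: 'a mat)" "j < dim_col (1\<^sub>m n :: 'a mat)"
    hence ij': "i < n" "j < n" by auto
    have "(Q * P) $$ (i,j) = (\<Sum>k<n. v (f i) k / N i * v (f j) k)"
      using ij' by (simp add: P_def Q_def scalar_prod_def lessThan_atLeast0)
    also have "\<dots> = (\<Sum>k<n. v (f i) k * v (f j) k) / N i"
      by (simp add: sum_divide_distrib)
    also have "\<dots> = 1\<^sub>m n $$ (i,j)"
    proof (cases "i = j")
      case True
      then show ?thesis using ij' nz[OF fS[OF ij'(1)]] by (simp add: N_def)
    next
      case False
      then have "f i \<noteq> f j" using finj ij' by blast
      then show ?thesis using ij' False orth[OF fS[OF ij'(1)] fS[OF ij'(2)]] by simp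
    qed
    finally show "(Q * P) $$ (i,j) = 1\<^sub>m n $$ (i,j)" .
  qed (use P Q in auto)
  have PQ: "P * Q = 1\<^sub>m n" using mat_mult_left_right_inverse[OF Q P QP] .
  have AP: "A * P = P * D"
  proof (rule eq_matI)
    fix i j assume ij: "i < dim_row (P * D)" "j < dim_col (P * D)"
    hence ij': "i < n" "j < n" using P D by auto
    have "(A * P) $$ (i,j) = (\<Sum>k<n. A $$ (i,k) * v (f j) k)"
      using ij' A by (simp add: P_def scalar_prod_def lessThan_atLeast0)
    also have "\<dots> = lam (f j) * v (f j) i" using eig[OF fS[OF ij'(2)] ij'(1)] .
    also have "\<dots> = (\<Sum>k<n. v (f k) i * (if k = j then lam (f k) else 0))"
      using ij' by (simp add: if_distrib sum.delta' mult.commute cong: if_cong)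
    also have "\<dots> = (P * D) $$ (i,j)"
      using ij' by (simp add: P_def D_def scalar_prod_def lessThan_atLeast0)
    finally show "(A * P) $$ (i,j) = (P * D) $$ (i,j)" .
  qed (use A P D in auto)
  have "A = A * (P * Q)" using A PQ by simp
  also have "\<dots> = (A * P) * Q" using A P Q by (simp add: assoc_mult_mat)
  also have "\<dots> = P * D * Q" using AP by simp
  finally have APDQ: "A = P * D * Q" .
  have "similar_mat A D" by (rule similar_matI[of A D P Q n]) (use A P Q D PQ QP APDQ in auto)
  hence "char_poly A = char_poly D" by (rule char_poly_similar)
  also have "\<dots> = (\<Prod>a\<leftarrow>diag_mat D. [:- a, 1:])"
    by (rule char_poly_upper_triangular[OF D]) (auto simp: upper_triangular_def D_def)
  also have "\<dots> = (\<Prod>j\<in>{0..<n}. [:- lam (f j), 1:])"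
    by (simp add: diag_mat_def D_def prod.distinct_set_conv_list[symmetric] comp_def)
  also have "\<dots> = (\<Prod>s\<in>S. [:- lam s, 1:])"
    using prod.reindex_bij_betw[OF f, of "\<lambda>s. [:- lam s, 1:]"] by simp
  finally show ?thesis .
qed


lemma nat_2cases: obtains q where "(i::nat) = 2*q" | q where "i = 2*q+1"
  by (metis evenE oddE)

lemma A: "((i < 2*k \<and> j < 2*k \<and> i div 2 = j div 2 \<and> i \<noteq> j) \<or>
     (2*k \<le> i \<and> 2*k \<le> j \<and> i < 2*k+2 \<and> j < 2*k+2 \<and> (i - 2*k < 2 \<and> j - 2*k < 2 \<and> i - 2*k \<noteq> j - 2*(k::nat)))) = (i < 2*Suc k \<and> j < 2*Suc k \<and> i div 2 = j div 2 \<and> i \<noteq> j)"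
  by (cases i rule: nat_2cases; cases j rule: nat_2cases) (auto, presburger+)

lemma copies_K2_order: "order (copies k (K 2)) = 2 * k"
  by (induction k) (auto simp: disj_union_def order_def complete_graph_def)

lemma copies_K2_adj: "adj (copies k (K 2)) i j \<longleftrightarrow> i < 2*k \<and> j < 2*k \<and> i div 2 = j div 2 \<and> i \<noteq> j"
proof (induction k arbitrary: i j)
  case 0 then show ?case by (simp add: adj_def)
next
  case (Suc k)
  have K2: "adj (K 2) i j = (i < 2 \<and> j < 2 \<and> i \<noteq> j)" for i j by (simp add: adj_def complete_graph_def)
  have oK: "order (K 2) = 2" by (simp add: order_def complete_graph_def)
  have "adj (copies (Suc k) (K 2)) i j = ((i < 2*k \<and> j < 2*k \<and> i div 2 = j div 2 \<and> i \<noteq> j) \<or>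
     (2*k \<le> i \<and> 2*k \<le> j \<and> i < 2*k+2 \<and> j < 2*k+2 \<and> (i - 2*k < 2 \<and> j - 2*k < 2 \<and> i - 2*k \<noteq> j - 2*k)))"
    unfolding copies.simps disj_union_def adj_def[of "(_, _)"] snd_conv copies_K2_order oK
    by (simp only: Suc.IH K2) blast
  also have "\<dots> = (i < 2*Suc k \<and> j < 2*Suc k \<and> i div 2 = j div 2 \<and> i \<noteq> j)"
    by (rule A)
  finally show ?case .
qed


definition Gr :: "nat \<Rightarrow> graph" where "Gr r = join (copies (r + 1) (K 2)) (copies (r + 1) (K 2))"

lemma join_copies_order: "order (join (copies p (K 2)) (copies p (K 2))) = 4 * p"
  by (simp add: join_def order_def[of "(_,_)"] copies_K2_order)

lemma div_shift: "2*(p::nat) \<le> i \<Longrightarrow> 2*p \<le> j \<Longrightarrow> ((i - 2*p) div 2 = (j - 2*p) div 2) = (i div 2 = j div 2)"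
proof -
  assume "2*p \<le> i" "2*p \<le> j"
  then obtain a b where "i = 2*p + a" "j = 2*p + b" by (metis le_add_diff_inverse)
  then show ?thesis by simp
qed

lemma join_copies_adj: "adj (join (copies p (K 2)) (copies p (K 2))) i j \<longleftrightarrow> i < 4*p \<and> j < 4*p \<and>
   ((i < 2*p) \<noteq> (j < 2*p) \<or> (i div 2 = j div 2 \<and> i \<noteq> j))"
proof -
  have "adj (join (copies p (K 2)) (copies p (K 2))) i j = ((i < 2*p \<and> j < 2*p \<and> (i < 2*p \<and> j < 2*p \<and> i div 2 = j div 2 \<and> i \<noteq> j)) \<or>
     (2*p \<le> i \<and> 2*p \<le> j \<and> i < 2*p+2*p \<and> j < 2*p+2*p \<and> 
       (i - 2*p < 2*p \<and> j - 2*p < 2*p \<and> (i - 2*p) div 2 = (j - 2*p) div 2 \<and> i - 2*p \<noteq> j - 2*p)) \<or>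
     (i < 2*p \<and> 2*p \<le> j \<and> j < 2*p+2*p) \<or> (j < 2*p \<and> 2*p \<le> i \<and> i < 2*p+2*p))"
    unfolding join_def disj_union_def adj_def[of "(_,_)"] snd_conv fst_conv copies_K2_order
    unfolding copies_K2_adj[unfolded adj_def] by (simp only: order_def[of "(_,_)"] fst_conv copies_K2_order copies_K2_adj) blast
  also have "\<dots> = (i < 4*p \<and> j < 4*p \<and>
   ((i < 2*p) \<noteq> (j < 2*p) \<or> (i div 2 = j div 2 \<and> i \<noteq> j)))"
    using div_shift[of p i j] by auto
  finally show ?thesis .
qed

lemma Gr_order: "order (Gr r) = 4 * r + 4"
  unfolding Gr_def join_copies_order by simp

lemma Gr_adj: "adj (Gr r) i j \<longleftrightarrow> i < 4*r+4 \<and> j < 4*r+4 \<and>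
   ((i < 2*r+2) \<noteq> (j < 2*r+2) \<or> (i div 2 = j div 2 \<and> i \<noteq> j))"
proof -
  have e: "4*(r+1) = 4*r+4" "2*(r+1) = 2*r+2" by simp_all
  show ?thesis unfolding Gr_def join_copies_adj e ..
qed



definition partner :: "nat \<Rightarrow> nat" where "partner i = (if even i then i + 1 else i - 1)"

lemma partner_iff: "(i div 2 = j div 2 \<and> i \<noteq> j) \<longleftrightarrow> j = partner i"
  unfolding partner_def by (cases i rule: nat_2cases; cases j rule: nat_2cases) (auto, presburger+)

lemma partner_bounds: "i < 4*r+4 \<Longrightarrow> partner i < 4*r+4 \<and> ((partner i < 2*r+2) = (i < 2*r+2)) \<and> partner i \<noteq> i"
  unfolding partner_def by (cases i rule: nat_2cases) (auto, presburger+)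

lemma Gr_adj_alt: "i < 4*r+4 \<Longrightarrow> adj (Gr r) i j \<longleftrightarrow> j < 4*r+4 \<and> ((i < 2*r+2) \<noteq> (j < 2*r+2) \<or> j = partner i)"
  unfolding Gr_adj partner_iff by auto

lemma Gr_degree: assumes i: "i < 4*r+4" shows "degree (Gr r) i = 2*r+3"
proof -
  have "{j. j < order (Gr r) \<and> adj (Gr r) i j} = (if i < 2*r+2 then {2*r+2..<4*r+4} else {0..<2*r+2}) \<union> {partner i}"
    using partner_bounds[OF i] unfolding Gr_order Gr_adj_alt[OF i] by auto
  moreover have "partner i \<notin> (if i < 2*r+2 then {2*r+2..<4*r+4} else {0..<2*r+2})"
    using partner_bounds[OF i] by auto
  ultimately show ?thesis unfolding degree_def by simp
qed

lemma Gr_num_edges: "num_edges (Gr r) = (2*r+2) * (2*r+2) + (2*r+2)"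
proof -
  let ?E = "{(i, j). i < j \<and> j < order (Gr r) \<and> adj (Gr r) i j}"
  let ?A = "{0..<2*r+2} \<times> {2*r+2..<4*r+4}"
  let ?B = "(\<lambda>k. (2*k, 2*k+1)) ` {..<2*r+2}"
  have "?E = ?A \<union> ?B"
  proof (intro equalityI subsetI)
    fix x assume "x \<in> ?E"
    then obtain i j where x: "x = (i,j)" "i < j" "j < 4*r+4" "adj (Gr r) i j" by (auto simp: Gr_order)
    then have i: "i < 4*r+4" by simp
    from x(4) have "(i < 2*r+2) \<noteq> (j < 2*r+2) \<or> j = partner i" using Gr_adj_alt[OF i] by simp
    then show "x \<in> ?A \<union> ?B"
    proof
      assume "(i < 2*r+2) \<noteq> (j < 2*r+2)" then show ?thesis using x by auto
    next
      assume j: "j = partner i"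
      then have "even i" "j = i + 1" using x(2) unfolding partner_def by (auto split: if_splits)
      then obtain k where "i = 2*k" by (auto elim: evenE)
      then show ?thesis using x \<open>j = i+1\<close> by auto
    qed
  next
    fix x assume "x \<in> ?A \<union> ?B"
    then show "x \<in> ?E"
    proof
      assume "x \<in> ?A" then show ?thesis by (auto simp: Gr_order Gr_adj)
    next
      assume "x \<in> ?B" then obtain k where "k < 2*r+2" "x = (2*k, 2*k+1)" by auto
      then show ?thesis by (auto simp: Gr_order Gr_adj)
    qed
  qed
  moreover have "?A \<inter> ?B = {}" by (auto, presburger+)
  moreover have "card ?B = 2*r+2" by (subst card_image) (auto simp: inj_on_def)
  ultimately show ?thesis unfolding num_edges_def by (simp add: card_Un_disjoint)
qed

lemma Gr_avg_degree: "avg_degree (Gr r) = 2 * real r + 3"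
proof -
  have "avg_degree (Gr r) = 2 * real ((2*r+2) * (2*r+2) + (2*r+2)) / real (4*r+4)"
    unfolding avg_degree_def Gr_num_edges Gr_order ..
  also have "\<dots> = 2 * real r + 3" by (simp add: field_simps)
  finally show ?thesis .
qed



definition ind :: "nat \<Rightarrow> nat \<Rightarrow> nat \<Rightarrow> complex" where
  "ind a b i = (if a \<le> i \<and> i < b then 1 else 0)"

lemma sum_ind: assumes "b \<le> n" shows "(\<Sum>i<n. ind a b i) = of_nat (b - a)"
proof -
  have "(\<Sum>i<n. ind a b i) = (\<Sum>i\<in>{..<n} \<inter> {a..<b}. 1)"
    by (subst sum.inter_restrict) (auto simp: ind_def)
  also have "{..<n} \<inter> {a..<b} = {a..<b}" using assms by auto
  finally show ?thesis by simp
qed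

lemma sum_ind2: assumes "b1 \<le> n" "b2 \<le> n"
  shows "(\<Sum>i<n. c1 * ind a1 b1 i + c2 * ind a2 b2 i) = c1 * of_nat (b1 - a1) + c2 * of_nat (b2 - a2)"
  by (simp add: sum.distrib sum_distrib_left[symmetric] sum_ind assms)

lemma Gr_lap_apply:
  fixes w :: "nat \<Rightarrow> complex"
  assumes i: "i < 4*r+4"
  shows "(\<Sum>k<4*r+4. map_mat complex_of_real (laplacian (Gr r)) $$ (i,k) * w k)
     = of_nat (2*r+3) * w i - w (partner i)
       - (\<Sum>k<4*r+4. (if i < 2*r+2 then ind (2*r+2) (4*r+4) k else ind 0 (2*r+2) k) * w k)"
proof -
  have pb: "partner i < 4*r+4" "(partner i < 2*r+2) = (i < 2*r+2)" "partner i \<noteq> i" using partner_bounds[OF i] by auto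
  have pw: "map_mat complex_of_real (laplacian (Gr r)) $$ (i,k) * w k =
     (if k = i then of_nat (2*r+3) * w i else 0) - (if k = partner i then w k else 0)
     - (if i < 2*r+2 then ind (2*r+2) (4*r+4) k else ind 0 (2*r+2) k) * w k" if k: "k < 4*r+4" for k
  proof -
    have e: "map_mat complex_of_real (laplacian (Gr r)) $$ (i,k) =
       complex_of_real ((if i = k then real (degree (Gr r) i) else 0) - (if adj (Gr r) i k then 1 else 0))"
      using i k by (simp add: laplacian_def Gr_order)
    show ?thesis unfolding e Gr_degree[OF i] Gr_adj_alt[OF i] using k i pb
      by (auto simp: ind_def)
  qed
  have "(\<Sum>k<4*r+4. map_mat complex_of_real (laplacian (Gr r)) $$ (i,k) * w k) =
    (\<Sum>k<4*r+4. (if k = i then of_nat (2*r+3) * w i else 0) - (if k = partner i then w k else 0)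
     - (if i < 2*r+2 then ind (2*r+2) (4*r+4) k else ind 0 (2*r+2) k) * w k)"
    by (rule sum.cong) (auto simp: pw)
  also have "\<dots> = of_nat (2*r+3) * w i - w (partner i)
       - (\<Sum>k<4*r+4. (if i < 2*r+2 then ind (2*r+2) (4*r+4) k else ind 0 (2*r+2) k) * w k)"
    using i pb by (simp add: sum_subtractf)
  finally show ?thesis .
qed



datatype lbl = One | PM | Dif nat | Hel nat nat

fun ev :: "nat \<Rightarrow> lbl \<Rightarrow> nat \<Rightarrow> complex" where
  "ev r One i = 1"
| "ev r PM i = ind 0 (2*r+2) i - ind (2*r+2) (4*r+4) i"
| "ev r (Dif q) i = ind (2*q) (2*q+1) i - ind (2*q+1) (2*q+2) i"
| "ev r (Hel b k) i = ind (b*(2*r+2)) (b*(2*r+2)+2*k) i - of_nat k * ind (b*(2*r+2)+2*k) (b*(2*r+2)+2*k+2) i"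

fun lam :: "nat \<Rightarrow> lbl \<Rightarrow> complex" where
  "lam r One = 0"
| "lam r PM = of_nat (4*r+4)"
| "lam r (Dif q) = of_nat (2*r+4)"
| "lam r (Hel b k) = of_nat (2*r+2)"

definition SG :: "nat \<Rightarrow> lbl set" where
  "SG r = {One, PM} \<union> Dif ` {..<2*r+2} \<union> (\<lambda>(b,k). Hel b k) ` ({..<2} \<times> {1..r})"

lemma SG_cases:
  assumes "s \<in> SG r"
  obtains "s = One" | "s = PM" | q where "s = Dif q" "q < 2*r+2"
    | b k where "s = Hel b k" "b < 2" "1 \<le> k" "k \<le> r"
  using assms unfolding SG_def by auto

lemma ev_partner:
  assumes i: "i < 4*r+4" and s: "s \<in> SG r" and nd: "\<And>q. s \<noteq> Dif q"
  shows "ev r s (partner i) = ev r s i"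
proof -
  have pb: "(partner i < 2*r+2) = (i < 2*r+2)" using partner_bounds[OF i] by auto
  from s show ?thesis
  proof (cases rule: SG_cases)
    case 1 then show ?thesis by simp
  next
    case 2 then show ?thesis using pb i partner_bounds[OF i] by (simp add: ind_def) (metis linorder_not_less)
  next
    case 3 then show ?thesis using nd by simp
  next
    case (4 b k)
    then have "b = 0 \<or> b = 1" by auto
    then show ?thesis using 4 unfolding partner_def
      by (cases i rule: nat_2cases) (auto simp: ind_def, presburger+)
  qed
qed

lemma ev_partner_dif: "ev r (Dif q) (partner i) = - ev r (Dif q) i"
  unfolding partner_def by (cases i rule: nat_2cases) (auto simp: ind_def, presburger+)

lemma dot_dif: assumes "2*q+1 < n"
  shows "(\<Sum>i<n. ev r (Dif q) i * w i) = w (2*q) - w (2*q+1)"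
proof -
  have "(\<Sum>i<n. ev r (Dif q) i * w i) = (\<Sum>i<n. (if i = 2*q then w i else 0) - (if i = 2*q+1 then w i else 0))"
    by (rule sum.cong) (auto simp: ind_def)
  also have "\<dots> = w (2*q) - w (2*q+1)" using assms by (simp add: sum_subtractf)
  finally show ?thesis .
qed



lemma sum_hel: assumes "b < 2" "k \<le> r"
  shows "(\<Sum>i<4*r+4. ev r (Hel b k) i) = 0"
proof -
  have le: "b*(2*r+2)+2*k \<le> 4*r+4" "b*(2*r+2)+2*k+2 \<le> 4*r+4" using assms by (cases b; auto)+
  have "(\<Sum>i<4*r+4. ev r (Hel b k) i) = (\<Sum>i<4*r+4. 1 * ind (b*(2*r+2)) (b*(2*r+2)+2*k) i + (- of_nat k) * ind (b*(2*r+2)+2*k) (b*(2*r+2)+2*k+2) i)"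
    by simp
  also have "\<dots> = 0" by (subst sum_ind2[OF le]) simp
  finally show ?thesis .
qed

lemma hel_restrict:
  assumes "b < 2" "k \<le> r" "b' < 2"
  shows "ind (b'*(2*r+2)) (b'*(2*r+2)+(2*r+2)) i * ev r (Hel b k) i = (if b = b' then ev r (Hel b k) i else 0)"
proof -
  have "b = 0 \<or> b = 1" "b' = 0 \<or> b' = 1" using assms by auto
  then show ?thesis using assms by (auto simp: ind_def)
qed

lemma part_sums:
  assumes s: "s \<in> SG r"
  shows "(\<Sum>k<4*r+4. ind (2*r+2) (4*r+4) k * ev r s k) = (if s = One then of_nat (2*r+2) else if s = PM then - of_nat (2*r+2) else 0)"
    and "(\<Sum>k<4*r+4. ind 0 (2*r+2) k * ev r s k) = (if s = One \<or> s = PM then of_nat (2*r+2) else 0)"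
proof -
  have "(\<Sum>k<4*r+4. ind (2*r+2) (4*r+4) k * ev r s k) = (if s = One then of_nat (2*r+2) else if s = PM then - of_nat (2*r+2) else 0)
     \<and> (\<Sum>k<4*r+4. ind 0 (2*r+2) k * ev r s k) = (if s = One \<or> s = PM then of_nat (2*r+2) else 0)"
  using s proof (cases rule: SG_cases)
    case 1 then show ?thesis by (simp add: sum_ind)
  next
    case 2
    have a: "(\<Sum>k<4*r+4. ind (2*r+2) (4*r+4) k * ev r s k) = (\<Sum>k<4*r+4. (-1) * ind (2*r+2) (4*r+4) k)"
      using 2 by (intro sum.cong) (auto simp: ind_def)
    have b: "(\<Sum>k<4*r+4. ind 0 (2*r+2) k * ev r s k) = (\<Sum>k<4*r+4. ind 0 (2*r+2) k)"
      using 2 by (intro sum.cong) (auto simp: ind_def)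
    show ?thesis unfolding a b using 2 by (simp add: sum_negf sum_ind)
  next
    case (3 q)
    have "2*q+1 < 4*r+4" using 3 by simp
    note d = dot_dif[OF this, of r]
    have e1: "(\<Sum>k<4*r+4. ind (2*r+2) (4*r+4) k * ev r s k) = (\<Sum>k<4*r+4. ev r (Dif q) k * ind (2*r+2) (4*r+4) k)"
      "(\<Sum>k<4*r+4. ind 0 (2*r+2) k * ev r s k) = (\<Sum>k<4*r+4. ev r (Dif q) k * ind 0 (2*r+2) k)"
      unfolding 3(1) by (simp_all only: mult.commute)
    have e2: "ind (2*r+2) (4*r+4) (2*q) = ind (2*r+2) (4*r+4) (2*q+1)" "ind 0 (2*r+2) (2*q) = ind 0 (2*r+2) (2*q+1)"
      using 3 unfolding ind_def by (auto, presburger+)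
    show ?thesis unfolding e1 d e2 using 3 by simp
  next
    case (4 b k)
    have r1: "\<And>x. ind (2*r+2) (4*r+4) x * ev r (Hel b k) x = (if b = 1 then ev r (Hel b k) x else 0)"
      using 4 by (auto simp: ind_def less_2_cases_iff)
    have r0: "\<And>x. ind 0 (2*r+2) x * ev r (Hel b k) x = (if b = 0 then ev r (Hel b k) x else 0)"
      using 4 by (auto simp: ind_def less_2_cases_iff)
    have z: "(\<Sum>x<4*r+4. ev r (Hel b k) x) = 0" using sum_hel[of b k r] 4 by simp
    show ?thesis unfolding 4(1) r1 r0 using z 4(2) by (auto simp del: ev.simps simp: less_2_cases_iff)
  qed
  then show "(\<Sum>k<4*r+4. ind (2*r+2) (4*r+4) k * ev r s k) = (if s = One then of_nat (2*r+2) else if s = PM then - of_nat (2*r+2) else 0)"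
    and "(\<Sum>k<4*r+4. ind 0 (2*r+2) k * ev r s k) = (if s = One \<or> s = PM then of_nat (2*r+2) else 0)" by auto
qed

lemma ev_eig:
  assumes s: "s \<in> SG r" and i: "i < 4*r+4"
  shows "(\<Sum>k<4*r+4. map_mat complex_of_real (laplacian (Gr r)) $$ (i,k) * ev r s k) = lam r s * ev r s i"
proof -
  have X: "(\<Sum>k<4*r+4. (if i < 2*r+2 then ind (2*r+2) (4*r+4) k else ind 0 (2*r+2) k) * ev r s k)
     = (if i < 2*r+2 then (\<Sum>k<4*r+4. ind (2*r+2) (4*r+4) k * ev r s k) else (\<Sum>k<4*r+4. ind 0 (2*r+2) k * ev r s k))"
    by simp
  note L = Gr_lap_apply[OF i, of "ev r s", unfolded X part_sums[OF s]]
  from s show ?thesis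
  proof (cases rule: SG_cases)
    case 1 then show ?thesis using L[unfolded 1] by (cases "i < 2*r+2") (simp_all add: algebra_simps)
  next
    case 2
    have pv: "ev r PM i = (if i < 2*r+2 then 1 else -1)" using i by (simp add: ind_def)
    show ?thesis unfolding 2 using L[unfolded 2] ev_partner[OF i s, unfolded 2] pv
      by (cases "i < 2*r+2") (simp_all del: ev.simps add: algebra_simps)
  next
    case (3 q) then show ?thesis using L[unfolded 3(1)] ev_partner_dif[of r q i] by (cases "i < 2*r+2") (simp_all del: ev.simps add: algebra_simps)
  next
    case (4 b k) then show ?thesis using L[unfolded 4(1)] ev_partner[OF i s, unfolded 4(1)] by (cases "i < 2*r+2") (simp_all del: ev.simps add: algebra_simps)
  qed
qed



lemma dif_orth:
  assumes t: "t \<in> SG r" and q: "q < 2*r+2" and ne: "Dif q \<noteq> t"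
  shows "(\<Sum>i<4*r+4. ev r (Dif q) i * ev r t i) = 0"
proof -
  have "2*q+1 < 4*r+4" using q by simp
  note d = dot_dif[OF this, of r "ev r t"]
  show ?thesis
  proof (cases "\<exists>q'. t = Dif q'")
    case True
    then obtain q' where "t = Dif q'" by auto
    then show ?thesis unfolding d using ne by (auto simp: ind_def)
  next
    case False
    have "partner (2*q) = 2*q+1" by (simp add: partner_def)
    then have "ev r t (2*q+1) = ev r t (2*q)" using ev_partner[of "2*q" r t] t q False by auto
    then show ?thesis unfolding d by simp
  qed
qed

lemma sum_pm: "(\<Sum>i<4*r+4. ev r PM i) = 0"
proof -
  have "(\<Sum>i<4*r+4. ev r PM i) = (\<Sum>i<4*r+4. 1 * ind 0 (2*r+2) i + (-1) * ind (2*r+2) (4*r+4) i)" by simp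
  also have "\<dots> = 0" by (subst sum_ind2) auto
  finally show ?thesis .
qed

lemma pm_hel: assumes "b < 2" "k \<le> r"
  shows "(\<Sum>i<4*r+4. ev r PM i * ev r (Hel b k) i) = 0"
proof -
  have "(\<Sum>i<4*r+4. ev r PM i * ev r (Hel b k) i) = (\<Sum>i<4*r+4. (if b = 0 then 1 else -1) * ev r (Hel b k) i)"
    using assms by (intro sum.cong) (auto simp: ind_def less_2_cases_iff)
  also have "\<dots> = 0" by (simp only: sum_distrib_left[symmetric] sum_hel[OF assms]) simp
  finally show ?thesis .
qed

lemma hel_hel: assumes "b < 2" "k \<le> r" "b' < 2" "k' \<le> r" "(b,k) \<noteq> (b',k')"
  shows "(\<Sum>i<4*r+4. ev r (Hel b k) i * ev r (Hel b' k') i) = 0"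
proof (cases "b = b'")
  case False
  have "(\<Sum>i<4*r+4. ev r (Hel b k) i * ev r (Hel b' k') i) = (\<Sum>i<4*r+4. 0)"
    using assms False by (intro sum.cong) (auto simp: ind_def less_2_cases_iff)
  then show ?thesis by simp
next
  case True
  then have "k \<noteq> k'" using assms by auto
  then show ?thesis
  proof (cases "k < k'")
    case True
    have "(\<Sum>i<4*r+4. ev r (Hel b k) i * ev r (Hel b' k') i) = (\<Sum>i<4*r+4. ev r (Hel b k) i)"
      using assms True \<open>b = b'\<close> by (intro sum.cong) (auto simp: ind_def less_2_cases_iff)
    then show ?thesis using sum_hel[of b k r] assms by simp
  next
    case False
    then have lt: "k' < k" using \<open>k \<noteq> k'\<close> by simp
    have "(\<Sum>i<4*r+4. ev r (Hel b k) i * ev r (Hel b' k') i) = (\<Sum>i<4*r+4. ev r (Hel b' k') i)"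
      using assms lt \<open>b = b'\<close> by (intro sum.cong) (auto simp: ind_def less_2_cases_iff)
    then show ?thesis using sum_hel[of b' k' r] assms by simp
  qed
qed

lemma ev_orth_aux:
  assumes s: "s \<in> SG r" and t: "t \<in> SG r" and ne: "s \<noteq> t"
    and ord: "(s = One) \<or> (s = PM \<and> t \<noteq> One) \<or> (\<exists>q. s = Dif q) \<or> (\<exists>b k. s = Hel b k \<and> (\<forall>q. t \<noteq> Dif q) \<and> t \<noteq> One \<and> t \<noteq> PM)"
  shows "(\<Sum>i<4*r+4. ev r s i * ev r t i) = 0"
proof -
  consider "s = One" | "s = PM" "t \<noteq> One" | q where "s = Dif q" | b k where "s = Hel b k" "\<forall>q. t \<noteq> Dif q" "t \<noteq> One" "t \<noteq> PM"
    using ord by blast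
  then show ?thesis
  proof cases
    case 1
    from t show ?thesis
    proof (cases rule: SG_cases)
      case 1 then show ?thesis using ne \<open>s = One\<close> by simp
    next
      case 2 then show ?thesis using \<open>s = One\<close> sum_pm[of r] by simp
    next
      case (3 q) then show ?thesis using \<open>s = One\<close> dif_orth[of One r q] s by (simp add: mult.commute)
    next
      case (4 b k) then show ?thesis using \<open>s = One\<close> sum_hel[of b k r] by simp
    qed
  next
    case 2
    from t show ?thesis
    proof (cases rule: SG_cases)
      case 1 then show ?thesis using 2 by simp
    next
      case 2 then show ?thesis using ne \<open>s = PM\<close> by simp
    next
      case (3 q) then show ?thesis using \<open>s = PM\<close> dif_orth[of PM r q] s by (simp add: mult.commute)
    next
      case (4 b k) then show ?thesis using \<open>s = PM\<close> pm_hel[of b k r] by simp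
    qed
  next
    case (3 q)
    then have "q < 2*r+2" using s unfolding SG_def by auto
    then show ?thesis using dif_orth[OF t _ ne[unfolded 3]] 3 by simp
  next
    case (4 b k)
    from t show ?thesis
    proof (cases rule: SG_cases)
      case 1 then show ?thesis using 4 by simp
    next
      case 2 then show ?thesis using 4 by simp
    next
      case (3 q) then show ?thesis using 4 by simp
    next
      case (4 b' k')
      have "b < 2" "k \<le> r" using s \<open>s = Hel b k\<close> unfolding SG_def by auto
      then show ?thesis using hel_hel[of b k r b' k'] 4 \<open>s = Hel b k\<close> ne by auto
    qed
  qed
qed

lemma ev_orth:
  assumes s: "s \<in> SG r" and t: "t \<in> SG r" and ne: "s \<noteq> t"
  shows "(\<Sum>i<4*r+4. ev r s i * ev r t i) = 0"
proof (cases "(s = One) \<or> (s = PM \<and> t \<noteq> One) \<or> (\<exists>q. s = Dif q) \<or> (\<exists>b k. s = Hel b k \<and> (\<forall>q. t \<noteq> Dif q) \<and> t \<noteq> One \<and> t \<noteq> PM)")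
  case True then show ?thesis using ev_orth_aux[OF s t ne] by blast
next
  case False
  then have "(t = One) \<or> (t = PM \<and> s \<noteq> One) \<or> (\<exists>q. t = Dif q) \<or> (\<exists>b k. t = Hel b k \<and> (\<forall>q. s \<noteq> Dif q) \<and> s \<noteq> One \<and> s \<noteq> PM)"
    using s by (cases s) auto
  then have "(\<Sum>i<4*r+4. ev r t i * ev r s i) = 0" using ev_orth_aux[OF t s ne[symmetric]] by blast
  then show ?thesis by (simp add: mult.commute)
qed

lemma ev_norm:
  assumes s: "s \<in> SG r"
  shows "(\<Sum>i<4*r+4. ev r s i * ev r s i) \<noteq> 0"
  using s
proof (cases rule: SG_cases)
  case 1
  have "(\<Sum>i<4*r+4. ev r s i * ev r s i) = of_nat (4*r+4)" using 1 by simp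
  then show ?thesis using of_nat_eq_0_iff[of "4*r+4", where 'a=complex] by simp
next
  case 2
  have "(\<Sum>i<4*r+4. ev r s i * ev r s i) = (\<Sum>i<4*r+4. 1 * ind 0 (2*r+2) i + 1 * ind (2*r+2) (4*r+4) i)"
    using 2 by (intro sum.cong) (auto simp: ind_def)
  also have "\<dots> = of_nat (4*r+4)" by (subst sum_ind2) auto
  finally show ?thesis using of_nat_eq_0_iff[of "4*r+4", where 'a=complex] by simp
next
  case (3 q)
  have "2*q+1 < 4*r+4" using 3 by simp
  then have "(\<Sum>i<4*r+4. ev r (Dif q) i * ev r (Dif q) i) = ev r (Dif q) (2*q) - ev r (Dif q) (2*q+1)"
    by (rule dot_dif)
  then show ?thesis unfolding 3 by (simp add: ind_def)
next
  case (4 b k)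
  have le: "b*(2*r+2)+2*k \<le> 4*r+4" "b*(2*r+2)+2*k+2 \<le> 4*r+4" using 4 by (auto simp: less_2_cases_iff)
  have "(\<Sum>i<4*r+4. ev r s i * ev r s i) = (\<Sum>i<4*r+4. 1 * ind (b*(2*r+2)) (b*(2*r+2)+2*k) i + (of_nat k * of_nat k) * ind (b*(2*r+2)+2*k) (b*(2*r+2)+2*k+2) i)"
    using 4 by (intro sum.cong) (auto simp: ind_def)
  also have "\<dots> = of_nat (2*k + 2*k*k)" by (subst sum_ind2[OF le]) simp
  finally show ?thesis using 4 of_nat_eq_0_iff[of "2*k + 2*k*k", where 'a=complex] by simp
qed



lemma SG_decomp: "SG r = ({One, PM} \<union> Dif ` {..<2*r+2}) \<union> (\<lambda>(b,k). Hel b k) ` ({..<2} \<times> {1..r})"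
  unfolding SG_def by auto

lemma SG_disj: "({One, PM} \<union> Dif ` {..<2*r+2}) \<inter> (\<lambda>(b,k). Hel b k) ` ({..<2} \<times> {1..r}) = {}"
  "{One, PM} \<inter> Dif ` {..<2*r+2} = {}" by auto

lemma inj_hel: "inj_on (\<lambda>(b,k). Hel b k) A" by (auto simp: inj_on_def)

lemma SG_finite: "finite (SG r)" unfolding SG_def by auto

lemma SG_sum: "(\<Sum>s\<in>SG r. f s) = f One + f PM + (\<Sum>q<2*r+2. f (Dif q)) + (\<Sum>x\<in>{..<2::nat} \<times> {1..r}. f (Hel (fst x) (snd x)))"
proof -
  have "(\<Sum>s\<in>SG r. f s) = (\<Sum>s\<in>{One, PM} \<union> Dif ` {..<2*r+2}. f s) + (\<Sum>s\<in>(\<lambda>(b,k). Hel b k) ` ({..<2} \<times> {1..r}). f s)"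
    unfolding SG_decomp by (rule sum.union_disjoint) (auto)
  also have "(\<Sum>s\<in>{One, PM} \<union> Dif ` {..<2*r+2}. f s) = (\<Sum>s\<in>{One, PM}. f s) + (\<Sum>s\<in>Dif ` {..<2*r+2}. f s)"
    by (rule sum.union_disjoint) auto
  also have "(\<Sum>s\<in>Dif ` {..<2*r+2}. f s) = (\<Sum>q<2*r+2. f (Dif q))"
    by (subst sum.reindex) (auto simp: inj_on_def)
  also have "(\<Sum>s\<in>(\<lambda>(b,k). Hel b k) ` ({..<2} \<times> {1..r}). f s) = (\<Sum>x\<in>{..<2::nat} \<times> {1..r}. f (Hel (fst x) (snd x)))"
    by (subst sum.reindex[OF inj_hel]) (auto simp: case_prod_beta)
  finally show ?thesis by simp
qed

lemma SG_card: "card (SG r) = 4*r+4"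
proof -
  have "card (SG r) = (\<Sum>s\<in>SG r. 1)" by simp
  also have "\<dots> = 4*r+4" unfolding SG_sum by simp
  finally show ?thesis .
qed

lemma Gr_charpoly: "char_poly (map_mat complex_of_real (laplacian (Gr r))) = (\<Prod>s\<in>SG r. [:- lam r s, 1:])"
proof (rule char_poly_orth_eig[where v = "ev r"])
  show "map_mat complex_of_real (laplacian (Gr r)) \<in> carrier_mat (4*r+4) (4*r+4)"
    by (simp add: laplacian_def Gr_order)
qed (auto simp: SG_finite SG_card ev_eig ev_orth ev_norm)

lemma proots_lin_prod: "finite S \<Longrightarrow> proots (\<Prod>s\<in>S. [:- (l s :: complex), 1:]) = (\<Sum>s\<in>S. {# l s #})"
  by (subst proots_prod) auto

lemma sum_mset_image_sum: "finite S \<Longrightarrow> sum_mset (image_mset f (\<Sum>s\<in>S. {# g s #})) = (\<Sum>s\<in>S. f (g s))"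
  by (induction S rule: finite_induct) auto

lemma cmod_nat_real: "cmod (complex_of_nat a - complex_of_real b) = \<bar>real a - b\<bar>"
proof -
  have "complex_of_nat a - complex_of_real b = complex_of_real (real a - b)" by simp
  then show ?thesis by (simp only: norm_of_real)
qed

lemma Gr_spectrum: "laplacian_spectrum (Gr r) = (\<Sum>s\<in>SG r. {# lam r s #})"
  unfolding laplacian_spectrum_def Gr_charpoly by (rule proots_lin_prod[OF SG_finite])

lemma Gr_LE: "LE (Gr r) = 8 * real r + 6"
proof -
  have "LE (Gr r) = (\<Sum>s\<in>SG r. cmod (lam r s - complex_of_real (2 * real r + 3)))"
    unfolding laplacian_energy_def Gr_spectrum Gr_avg_degree by (rule sum_mset_image_sum[OF SG_finite])
  also have "\<dots> = (2 * real r + 3) + (2 * real r + 1) + (2 * real r + 2) + 2 * real r"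
  proof -
    have "cmod (lam r One - complex_of_real (2 * real r + 3)) = 2 * real r + 3"
      using cmod_nat_real[of 0 "2 * real r + 3"] by simp
    moreover have "cmod (lam r PM - complex_of_real (2 * real r + 3)) = 2 * real r + 1"
      using cmod_nat_real[of "4*r+4" "2 * real r + 3"] by simp
    moreover have "\<And>q. cmod (lam r (Dif q) - complex_of_real (2 * real r + 3)) = 1"
      using cmod_nat_real[of "2*r+4" "2 * real r + 3"] by simp
    moreover have "\<And>b k. cmod (lam r (Hel b k) - complex_of_real (2 * real r + 3)) = 1"
      using cmod_nat_real[of "2*r+2" "2 * real r + 3"] by simp
    ultimately show ?thesis unfolding SG_sum by simp
  qed
  also have "\<dots> = 8 * real r + 6" by simp
  finally show ?thesis .
qed



lemma K_order: "order (K N) = N" by (simp add: order_def complete_graph_def)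
lemma K_adj: "adj (K N) i j \<longleftrightarrow> i < N \<and> j < N \<and> i \<noteq> j" by (simp add: adj_def complete_graph_def)

lemma K_degree: "i < N \<Longrightarrow> degree (K N) i = N - 1"
proof -
  assume i: "i < N"
  have "{j. j < order (K N) \<and> adj (K N) i j} = {..<N} - {i}" using i by (auto simp: K_order K_adj)
  then show ?thesis using i unfolding degree_def by simp
qed

lemma card_pairs: "2 * card {(i, j). i < j \<and> j < (N::nat)} = N * (N - 1)"
proof (induction N)
  case 0 then show ?case by simp
next
  case (Suc N)
  have e: "{(i, j). i < j \<and> j < Suc N} = {(i, j). i < j \<and> j < N} \<union> (\<lambda>i. (i, N)) ` {..<N}" by auto
  have f: "finite {(i, j). i < j \<and> j < (N::nat)}"
    by (rule finite_subset[of _ "{..<N} \<times> {..<N}"]) auto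
  have "card {(i, j). i < j \<and> j < Suc N} = card {(i, j). i < j \<and> j < N} + N"
    unfolding e by (subst card_Un_disjoint) (auto simp: f card_image inj_on_def)
  then show ?case using Suc.IH by (cases N) (auto simp: algebra_simps)
qed

lemma K_avg_degree: "N > 0 \<Longrightarrow> avg_degree (K N) = real N - 1"
proof -
  assume N: "N > 0"
  have "num_edges (K N) = card {(i, j). i < j \<and> j < N}"
    unfolding num_edges_def K_order K_adj by (rule arg_cong[where f = card]) auto
  then have "real (2 * num_edges (K N)) = real (N * (N - 1))"
    using card_pairs[of N] by simp
  then have "2 * real (num_edges (K N)) = real N * (real N - 1)"
    using N by (simp add: of_nat_diff)
  then show ?thesis unfolding avg_degree_def K_order using N by (simp add: field_simps)
qed

lemma K_lap_apply:
  fixes w :: "nat \<Rightarrow> complex"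
  assumes i: "i < N"
  shows "(\<Sum>k<N. map_mat complex_of_real (laplacian (K N)) $$ (i,k) * w k) = of_nat N * w i - (\<Sum>k<N. w k)"
proof -
  have pw: "map_mat complex_of_real (laplacian (K N)) $$ (i,k) * w k = (if k = i then of_nat N * w k else 0) - w k"
    if k: "k < N" for k
  proof -
    have e: "map_mat complex_of_real (laplacian (K N)) $$ (i,k) =
       complex_of_real ((if i = k then real (degree (K N) i) else 0) - (if adj (K N) i k then 1 else 0))"
      using i k by (simp add: laplacian_def K_order)
    show ?thesis unfolding e K_degree[OF i] K_adj using i k by (auto simp: of_nat_diff algebra_simps)
  qed
  have "(\<Sum>k<N. map_mat complex_of_real (laplacian (K N)) $$ (i,k) * w k) = (\<Sum>k<N. (if k = i then of_nat N * w k else 0) - w k)"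
    by (rule sum.cong) (auto simp: pw)
  also have "\<dots> = of_nat N * w i - (\<Sum>k<N. w k)" using i by (simp add: sum_subtractf)
  finally show ?thesis .
qed

fun evK :: "lbl \<Rightarrow> nat \<Rightarrow> complex" where
  "evK One i = 1"
| "evK (Hel b k) i = ind 0 k i - of_nat k * ind k (k+1) i"
| "evK _ i = 0"

fun lamK :: "nat \<Rightarrow> lbl \<Rightarrow> complex" where
  "lamK N One = 0"
| "lamK N _ = of_nat N"

definition SK :: "nat \<Rightarrow> lbl set" where "SK N = insert One ((\<lambda>k. Hel 0 k) ` {1..<N})"

lemma SK_finite: "finite (SK N)" by (simp add: SK_def)
lemma SK_card: "N > 0 \<Longrightarrow> card (SK N) = N"
  unfolding SK_def by (subst card_insert_disjoint) (auto simp: card_image inj_on_def)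

lemma sum_helK: "k < N \<Longrightarrow> (\<Sum>i<N. evK (Hel b k) i) = 0"
proof -
  assume k: "k < N"
  have "(\<Sum>i<N. evK (Hel b k) i) = (\<Sum>i<N. 1 * ind 0 k i + (- of_nat k) * ind k (k+1) i)" by simp
  also have "\<dots> = 0" using k by (subst sum_ind2) auto
  finally show ?thesis .
qed

lemma SK_cases: assumes "s \<in> SK N" obtains "s = One" | k where "s = Hel 0 k" "1 \<le> k" "k < N"
  using assms unfolding SK_def by auto

lemma evK_eig: assumes s: "s \<in> SK N" and i: "i < N"
  shows "(\<Sum>k<N. map_mat complex_of_real (laplacian (K N)) $$ (i,k) * evK s k) = lamK N s * evK s i"
  using s
proof (cases rule: SK_cases)
  case 1 then show ?thesis unfolding K_lap_apply[OF i] by simp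
next
  case (2 k) then show ?thesis unfolding K_lap_apply[OF i] using sum_helK[of k N 0] by (simp del: evK.simps)
qed

lemma evK_orth: assumes s: "s \<in> SK N" and t: "t \<in> SK N" and ne: "s \<noteq> t"
  shows "(\<Sum>i<N. evK s i * evK t i) = 0"
proof -
  have hh: "(\<Sum>i<N. evK (Hel 0 k) i * evK (Hel 0 l) i) = 0" if "k < l" "l < N" for k l
  proof -
    have "(\<Sum>i<N. evK (Hel 0 k) i * evK (Hel 0 l) i) = (\<Sum>i<N. evK (Hel 0 k) i)"
      using that by (intro sum.cong) (auto simp: ind_def)
    then show ?thesis using sum_helK[of k N 0] that by simp
  qed
  from s show ?thesis
  proof (cases rule: SK_cases)
    case 1
    from t show ?thesis
    proof (cases rule: SK_cases)
      case 1 then show ?thesis using ne \<open>s = One\<close> by simp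
    next
      case (2 k) then show ?thesis using \<open>s = One\<close> sum_helK[of k N 0] by simp
    qed
  next
    case (2 k)
    from t show ?thesis
    proof (cases rule: SK_cases)
      case 1 then show ?thesis using \<open>s = Hel 0 k\<close> \<open>k < N\<close> sum_helK[of k N 0] by simp
    next
      case (2 l)
      then have "k \<noteq> l" using ne \<open>s = Hel 0 k\<close> by auto
      then consider "k < l" | "l < k" by linarith
      then show ?thesis
      proof cases
        case 1 then show ?thesis using hh[of k l] 2 \<open>s = Hel 0 k\<close> by simp
      next
        case 2 then show ?thesis using hh[of l k] \<open>t = Hel 0 l\<close> \<open>s = Hel 0 k\<close> \<open>k < N\<close> by (simp add: mult.commute)
      qed
    qed
  qed
qed

lemma evK_norm: assumes s: "s \<in> SK N" and N: "N > 0" shows "(\<Sum>i<N. evK s i * evK s i) \<noteq> 0"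
  using s
proof (cases rule: SK_cases)
  case 1 then show ?thesis using of_nat_eq_0_iff[of N, where 'a=complex] N by auto
next
  case (2 k)
  have "(\<Sum>i<N. evK s i * evK s i) = (\<Sum>i<N. 1 * ind 0 k i + (of_nat k * of_nat k) * ind k (k+1) i)"
    using 2 by (intro sum.cong) (auto simp: ind_def)
  also have "\<dots> = of_nat (k + k*k)" using 2 by (subst sum_ind2) auto
  finally show ?thesis using 2 of_nat_eq_0_iff[of "k + k*k", where 'a=complex] by simp
qed

lemma K_charpoly: assumes "N > 0"
  shows "char_poly (map_mat complex_of_real (laplacian (K N))) = (\<Prod>s\<in>SK N. [:- lamK N s, 1:])"
proof (rule char_poly_orth_eig[where v = evK])
  show "map_mat complex_of_real (laplacian (K N)) \<in> carrier_mat N N"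
    by (simp add: laplacian_def K_order)
qed (auto simp: SK_finite SK_card[OF assms] evK_eig evK_orth evK_norm assms)

lemma K_spectrum: "N > 0 \<Longrightarrow> laplacian_spectrum (K N) = (\<Sum>s\<in>SK N. {# lamK N s #})"
  unfolding laplacian_spectrum_def by (simp only: K_charpoly) (rule proots_lin_prod[OF SK_finite])

lemma K_LE: assumes N: "N > 0" shows "LE (K N) = 2 * real N - 2"
proof -
  have "LE (K N) = (\<Sum>s\<in>SK N. cmod (lamK N s - complex_of_real (real N - 1)))"
    unfolding laplacian_energy_def K_spectrum[OF N] K_avg_degree[OF N] by (rule sum_mset_image_sum[OF SK_finite])
  also have "\<dots> = cmod (lamK N One - complex_of_real (real N - 1)) + (\<Sum>k\<in>{1..<N}. cmod (lamK N (Hel 0 k) - complex_of_real (real N - 1)))"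
    unfolding SK_def by (subst sum.insert) (auto simp: sum.reindex inj_on_def)
  also have "\<dots> = (real N - 1) + real (N - 1)"
  proof -
    have c1: "cmod (lamK N One - complex_of_real (real N - 1)) = real N - 1"
      using cmod_nat_real[of 0 "real N - 1"] N by simp
    have c2: "cmod (lamK N (Hel 0 k) - complex_of_real (real N - 1)) = 1" for k
      using cmod_nat_real[of N "real N - 1"] by simp
    show ?thesis unfolding c1 c2 by simp
  qed
  also have "\<dots> = 2 * real N - 2" using N by (simp add: of_nat_diff)
  finally show ?thesis .
qed

lemma mem_sum_single: "finite S \<Longrightarrow> x \<in># (\<Sum>s\<in>S. {# l s #}) \<longleftrightarrow> (\<exists>s\<in>S. l s = x)"
proof (induction S rule: finite_induct)
  case empty then show ?case by simp
next
  case (insert y F)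
  have "(\<Sum>s\<in>insert y F. {# l s #}) = {# l y #} + (\<Sum>s\<in>F. {# l s #})" using insert by simp
  then show ?case using insert by auto
qed


theorem theorem3:
  fixes r :: nat
  assumes "r \<ge> 1"
  defines "G \<equiv> join (copies (r + 1) (K 2)) (copies (r + 1) (K 2))"
  shows "order G = 4 * r + 4
    \<and> LE G = LE (K (4 * r + 4)) \<and> LE (K (4 * r + 4)) = 8 * real r + 6
    \<and> L_borderenergetic G
    \<and> laplacian_spectrum G \<noteq> laplacian_spectrum (K (4 * r + 4))"
proof -
  have G: "G = Gr r" unfolding G_def Gr_def ..
  have o: "order G = 4 * r + 4" unfolding G by (rule Gr_order)
  have le1: "LE G = 8 * real r + 6" unfolding G by (rule Gr_LE)
  have le2: "LE (K (4 * r + 4)) = 8 * real r + 6" using K_LE[of "4*r+4"] by simp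
  have be: "L_borderenergetic G" unfolding L_borderenergetic_def o le1 le2 ..
  have m1: "complex_of_nat (2*r+4) \<in># laplacian_spectrum G"
    unfolding G Gr_spectrum mem_sum_single[OF SG_finite]
    by (rule bexI[of _ "Dif 0"]) (auto simp: SG_def)
  have m2: "complex_of_nat (2*r+4) \<notin># laplacian_spectrum (K (4 * r + 4))"
  proof
    assume "complex_of_nat (2*r+4) \<in># laplacian_spectrum (K (4 * r + 4))"
    then obtain s where s: "s \<in> SK (4*r+4)" "lamK (4*r+4) s = complex_of_nat (2*r+4)"
      unfolding K_spectrum[of "4*r+4", simplified] mem_sum_single[OF SK_finite] by blast
    have "lamK (4*r+4) s = 0 \<or> lamK (4*r+4) s = complex_of_nat (4*r+4)" by (cases s) auto
    then show False using s(2) assms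
      using of_nat_eq_iff[of "2*r+4" "4*r+4", where 'a=complex] of_nat_eq_0_iff[of "2*r+4", where 'a=complex]
      by auto
  qed
  have "laplacian_spectrum G \<noteq> laplacian_spectrum (K (4 * r + 4))" using m1 m2 by auto
  then show ?thesis using o le1 le2 be by simp
qed

end
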